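(* Let $\mathcal{H}$ be a supersolvable hyperplane arrangement of rank $n\geq 2$. Then the graph of regions $G(\mathcal{H})$ has a Hamiltonian cycle of even length.
   Context: A hyperplane arrangement in $\mathbb{R}^d$ is a finite set $\mathcal{H}$ of linear hyperplanes (hyperplanes through the origin). Its rank is the dimension of the span of the normal vectors of its hyperplanes. The regions of $\mathcal{H}$ are the connected components of $\mathbb{R}^d\setminus\bigcup_{H\in\mathcal{H}}H$. The graph of regions $G(\mathcal{H})$ has the regions as vertices, two regions being adjacent if and only if they are separated by exactly one hyperplane of $\mathcal{H}$. Supersolvability is defined recursively on the rank: an arrangement $\mathcal{H}$ of rank $n$ is supersolvable if either $n\leq 2$, or $n\geq 3$ and $\mathcal{H}$ is the disjoint union of two nonempty arrangements $\mathcal{H}_0$ and $\mathcal{H}_1$, where $\mathcal{H}_0$ is a supersolvable arrangement of rank $n-1$, and for any two distinct hyperplanes $H',H''\in\mathcal{H}_1$ there exists $H\in\mathcal{H}_0$ with $H'\cap H''\subseteq H$. *)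

theory Defs
  imports "HOL-Analysis.Analysis"
begin

definition linear_hyperplane :: "'a::euclidean_space set \<Rightarrow> bool" where
  "linear_hyperplane H \<longleftrightarrow> (\<exists>a. a \<noteq> 0 \<and> H = {x. a \<bullet> x = 0})"

definition arrangement :: "'a::euclidean_space set set \<Rightarrow> bool" where
  "arrangement \<A> \<longleftrightarrow> finite \<A> \<and> (\<forall>H\<in>\<A>. linear_hyperplane H)"

definition arr_rank :: "'a::euclidean_space set set \<Rightarrow> nat" where
  "arr_rank \<A> = dim {a. a \<noteq> 0 \<and> {x. a \<bullet> x = 0} \<in> \<A>}"

definition regions :: "'a::euclidean_space set set \<Rightarrow> 'a set set" where
  "regions \<A> = components (- \<Union>\<A>)"

definition separates :: "'a::euclidean_space set \<Rightarrow> 'a set \<Rightarrow> 'a set \<Rightarrow> bool" where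
  "separates H R1 R2 \<longleftrightarrow> \<not> (\<exists>C\<in>components (- H). R1 \<subseteq> C \<and> R2 \<subseteq> C)"

definition region_adj :: "'a::euclidean_space set set \<Rightarrow> 'a set \<Rightarrow> 'a set \<Rightarrow> bool" where
  "region_adj \<A> R1 R2 \<longleftrightarrow> R1 \<in> regions \<A> \<and> R2 \<in> regions \<A> \<and>
     card {H\<in>\<A>. separates H R1 R2} = 1"

text \<open>Its length is the number of edges
  = number of vertices.\<close>
definition hamiltonian_cycle :: "'a::euclidean_space set set \<Rightarrow> 'a set list \<Rightarrow> bool" where
  "hamiltonian_cycle \<A> cs \<longleftrightarrow> distinct cs \<and> set cs = regions \<A> \<and> length cs \<ge> 3 \<and>
     (\<forall>i < length cs. region_adj \<A> (cs ! i) (cs ! ((i + 1) mod length cs)))"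

inductive supersolvable :: "'a::euclidean_space set set \<Rightarrow> bool" where
  base: "arrangement \<A> \<Longrightarrow> arr_rank \<A> \<le> 2 \<Longrightarrow> supersolvable \<A>"
| step: "arrangement \<A> \<Longrightarrow> arr_rank \<A> \<ge> 3 \<Longrightarrow>
         \<A> = \<A>0 \<union> \<A>1 \<Longrightarrow> \<A>0 \<inter> \<A>1 = {} \<Longrightarrow> \<A>0 \<noteq> {} \<Longrightarrow> \<A>1 \<noteq> {} \<Longrightarrow>
         supersolvable \<A>0 \<Longrightarrow> arr_rank \<A>0 = arr_rank \<A> - 1 \<Longrightarrow>
         (\<forall>H'\<in>\<A>1. \<forall>H''\<in>\<A>1. H' \<noteq> H'' \<longrightarrow> (\<exists>H\<in>\<A>0. H' \<inter> H'' \<subseteq> H)) \<Longrightarrow>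
         supersolvable \<A>"

end

theory Submission
  imports Defs
begin


definition sv :: "('a::euclidean_space set \<Rightarrow> 'a) \<Rightarrow> 'a set set \<Rightarrow> 'a \<Rightarrow> 'a set set" where
  "sv nr A x = {H\<in>A. nr H \<bullet> x > 0}"

definition goodnrm :: "('a::euclidean_space set \<Rightarrow> 'a) \<Rightarrow> 'a set set \<Rightarrow> bool" where
  "goodnrm nr A \<longleftrightarrow> (\<forall>H\<in>A. nr H \<noteq> 0 \<and> H = {x. nr H \<bullet> x = 0})"

lemma goodnrm_mem: "goodnrm nr A \<Longrightarrow> H \<in> A \<Longrightarrow> x \<in> H \<longleftrightarrow> nr H \<bullet> x = 0"
  unfolding goodnrm_def by blast

lemma goodnrm_subset: "goodnrm nr A \<Longrightarrow> B \<subseteq> A \<Longrightarrow> goodnrm nr B"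
  unfolding goodnrm_def by blast

lemma notin_Union: "goodnrm nr A \<Longrightarrow> x \<notin> \<Union>A \<longleftrightarrow> (\<forall>H\<in>A. nr H \<bullet> x \<noteq> 0)"
  unfolding goodnrm_def by blast

lemma cell_convex:
  assumes g: "goodnrm nr A"
  shows "convex {z. z \<notin> \<Union>A \<and> sv nr A z = S}"
proof (rule convexI)
  fix z1 z2 and u v :: real
  assume z1: "z1 \<in> {z. z \<notin> \<Union>A \<and> sv nr A z = S}" and z2: "z2 \<in> {z. z \<notin> \<Union>A \<and> sv nr A z = S}"
    and uv: "0 \<le> u" "0 \<le> v" "u + v = 1"
  let ?w = "u *\<^sub>R z1 + v *\<^sub>R z2"
  have key: "(nr H \<bullet> ?w > 0 \<longleftrightarrow> H \<in> S) \<and> nr H \<bullet> ?w \<noteq> 0" if H: "H \<in> A" for H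
  proof -
    have n1: "nr H \<bullet> z1 \<noteq> 0" "nr H \<bullet> z2 \<noteq> 0" using z1 z2 H notin_Union[OF g] by auto
    have s: "(nr H \<bullet> z1 > 0 \<longleftrightarrow> H \<in> S)" "(nr H \<bullet> z2 > 0 \<longleftrightarrow> H \<in> S)"
      using z1 z2 H unfolding sv_def by auto
    have e: "nr H \<bullet> ?w = u * (nr H \<bullet> z1) + v * (nr H \<bullet> z2)"
      by (simp add: inner_add_right)
    show ?thesis
    proof (cases "H \<in> S")
      case True
      then have "nr H \<bullet> z1 > 0" "nr H \<bullet> z2 > 0" using s by auto
      then have "u * (nr H \<bullet> z1) + v * (nr H \<bullet> z2) > 0" using uv
        by (smt (verit) mult_nonneg_nonneg mult_pos_pos)
      then show ?thesis using e True by auto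
    next
      case False
      then have "nr H \<bullet> z1 < 0" "nr H \<bullet> z2 < 0" using s n1 by auto
      then have "u * (nr H \<bullet> z1) + v * (nr H \<bullet> z2) < 0" using uv
        by (smt (verit) mult_nonneg_nonpos mult_pos_neg)
      then show ?thesis using e False by auto
    qed
  qed
  have "?w \<notin> \<Union>A" using key notin_Union[OF g] by blast
  moreover have "sv nr A ?w = S"
    using key z1 unfolding sv_def by auto
  ultimately show "?w \<in> {z. z \<notin> \<Union>A \<and> sv nr A z = S}" by blast
qed

lemma ccs_eq:
  assumes g: "goodnrm nr A" and x: "x \<notin> \<Union>A"
  shows "connected_component_set (- \<Union>A) x = {z. z \<notin> \<Union>A \<and> sv nr A z = sv nr A x}"
proof
  show "{z. z \<notin> \<Union>A \<and> sv nr A z = sv nr A x} \<subseteq> connected_component_set (- \<Union>A) x"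
    apply (rule connected_component_maximal)
    using x cell_convex[OF g] convex_connected by auto
next
  show "connected_component_set (- \<Union>A) x \<subseteq> {z. z \<notin> \<Union>A \<and> sv nr A z = sv nr A x}"
  proof
    fix z assume z: "z \<in> connected_component_set (- \<Union>A) x"
    let ?C = "connected_component_set (- \<Union>A) x"
    have Cs: "?C \<subseteq> - \<Union>A" by (rule connected_component_subset)
    have xC: "x \<in> ?C" using x by auto
    have zn: "z \<notin> \<Union>A" using z Cs by auto
    have "(nr H \<bullet> z > 0 \<longleftrightarrow> nr H \<bullet> x > 0)" if H: "H \<in> A" for H
    proof (rule ccontr)
      assume ne: "\<not> ?thesis"
      have nz: "nr H \<bullet> z \<noteq> 0" "nr H \<bullet> x \<noteq> 0" using zn x H notin_Union[OF g] by auto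
      have "\<exists>w\<in>?C. nr H \<bullet> w = 0"
      proof (cases "nr H \<bullet> x > 0")
        case True
        then have "nr H \<bullet> z \<le> 0" using ne by auto
        then show ?thesis using connected_ivt_hyperplane[of ?C z x "nr H" 0] z xC True by auto
      next
        case False
        then have "nr H \<bullet> z \<ge> 0" "nr H \<bullet> x \<le> 0" using ne by auto
        then show ?thesis using connected_ivt_hyperplane[of ?C x z "nr H" 0] z xC by auto
      qed
      then obtain w where "w \<in> ?C" "nr H \<bullet> w = 0" by blast
      then show False using Cs H notin_Union[OF g] by auto
    qed
    then have "sv nr A z = sv nr A x" unfolding sv_def by auto
    then show "z \<in> {z. z \<notin> \<Union>A \<and> sv nr A z = sv nr A x}" using zn by auto
  qed
qed

definition rg :: "'a::euclidean_space set set \<Rightarrow> 'a \<Rightarrow> 'a set" where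
  "rg A x = connected_component_set (- \<Union>A) x"

lemma regions_rg: "regions A = rg A ` (- \<Union>A)"
  unfolding regions_def rg_def components_def by auto

lemma rg_self: "x \<notin> \<Union>A \<Longrightarrow> x \<in> rg A x"
  unfolding rg_def by auto

lemma rg_eq_iff:
  assumes g: "goodnrm nr A" and x: "x \<notin> \<Union>A" and y: "y \<notin> \<Union>A"
  shows "rg A x = rg A y \<longleftrightarrow> sv nr A x = sv nr A y"
  using ccs_eq[OF g x] ccs_eq[OF g y] x y unfolding rg_def by blast

lemma rg_mem:
  assumes g: "goodnrm nr A" and x: "x \<notin> \<Union>A"
  shows "z \<in> rg A x \<longleftrightarrow> z \<notin> \<Union>A \<and> sv nr A z = sv nr A x"
  using ccs_eq[OF g x] unfolding rg_def by blast

lemma separates_iff: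
  assumes g: "goodnrm nr A" and H: "H \<in> A" and x: "x \<notin> \<Union>A" and y: "y \<notin> \<Union>A"
  shows "separates H (rg A x) (rg A y) \<longleftrightarrow> \<not> (nr H \<bullet> x > 0 \<longleftrightarrow> nr H \<bullet> y > 0)"
proof -
  have gH: "goodnrm nr {H}" using goodnrm_subset[OF g] H by auto
  have xH: "x \<notin> H" "y \<notin> H" using x y H by auto
  have svH: "sv nr {H} z = (if nr H \<bullet> z > 0 then {H} else {})" for z unfolding sv_def by auto
  have cH: "connected_component_set (- H) w = {z. z \<notin> H \<and> sv nr {H} z = sv nr {H} w}" if "w \<notin> H" for w
    using ccs_eq[OF gH, of w] that by simp
  have sub: "rg A w \<subseteq> connected_component_set (- H) w" if "w \<notin> \<Union>A" for w
    unfolding rg_def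
    apply (rule connected_component_maximal)
    using that H connected_component_subset[of "- \<Union>A" w] by auto
  show ?thesis
  proof
    assume sep: "separates H (rg A x) (rg A y)"
    show "\<not> (nr H \<bullet> x > 0 \<longleftrightarrow> nr H \<bullet> y > 0)"
    proof
      assume same: "nr H \<bullet> x > 0 \<longleftrightarrow> nr H \<bullet> y > 0"
      have "y \<in> connected_component_set (- H) x"
        using cH[OF xH(1)] xH same svH by auto
      then have e: "connected_component_set (- H) y = connected_component_set (- H) x"
        by (rule connected_component_eq)
      have "connected_component_set (- H) x \<in> components (- H)"
        using xH unfolding components_def by auto
      then show False using sep sub[OF x] sub[OF y] e unfolding separates_def by auto
    qed
  next
    assume diff: "\<not> (nr H \<bullet> x > 0 \<longleftrightarrow> nr H \<bullet> y > 0)"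
    show "separates H (rg A x) (rg A y)"
      unfolding separates_def
    proof
      assume "\<exists>C\<in>components (- H). rg A x \<subseteq> C \<and> rg A y \<subseteq> C"
      then obtain C where C: "C \<in> components (- H)" "rg A x \<subseteq> C" "rg A y \<subseteq> C" by blast
      have xC: "x \<in> C" "y \<in> C" using C rg_self x y by auto
      have cC: "connected C" "C \<subseteq> - H" using in_components_connected[OF C(1)] in_components_subset[OF C(1)] by auto
      have nz: "nr H \<bullet> x \<noteq> 0" "nr H \<bullet> y \<noteq> 0" using xH H g unfolding goodnrm_def by auto
      have "\<exists>w\<in>C. nr H \<bullet> w = 0"
      proof (cases "nr H \<bullet> x > 0")
        case True
        then have "nr H \<bullet> y \<le> 0" using diff by auto
        then show ?thesis using connected_ivt_hyperplane[of C y x "nr H" 0] xC cC True by auto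
      next
        case False
        then have "nr H \<bullet> y \<ge> 0" "nr H \<bullet> x \<le> 0" using diff by auto
        then show ?thesis using connected_ivt_hyperplane[of C x y "nr H" 0] xC cC by auto
      qed
      then show False using cC H g unfolding goodnrm_def by auto
    qed
  qed
qed

lemma adj_iff:
  assumes g: "goodnrm nr A" and x: "x \<notin> \<Union>A" and y: "y \<notin> \<Union>A"
  shows "region_adj A (rg A x) (rg A y) \<longleftrightarrow>
     card ((sv nr A x - sv nr A y) \<union> (sv nr A y - sv nr A x)) = 1"
proof -
  have "{H\<in>A. separates H (rg A x) (rg A y)} = (sv nr A x - sv nr A y) \<union> (sv nr A y - sv nr A x)"
    using separates_iff[OF g _ x y] unfolding sv_def by auto
  moreover have "rg A x \<in> regions A" "rg A y \<in> regions A" unfolding regions_rg using x y by auto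
  ultimately show ?thesis unfolding region_adj_def by simp
qed




lemma count_exists:
  fixes V :: "real set"
  assumes fin: "finite V"
  shows "j \<le> card V \<Longrightarrow> \<exists>t. t \<notin> V \<and> card {v\<in>V. v < t} = j"
proof (induction j)
  case 0
  define t where "t = (if V = {} then 0 else Min V - 1)"
  have "t \<notin> V \<and> {v\<in>V. v < t} = {}"
  proof (cases "V = {}")
    case False
    have "\<And>v. v \<in> V \<Longrightarrow> Min V \<le> v" using fin by (simp add: Min_le)
    then show ?thesis using False unfolding t_def by force
  qed (simp add: t_def)
  then have "t \<notin> V \<and> card {v\<in>V. v < t} = 0" by (metis card.empty)
  then show ?case by blast
next
  case (Suc j)
  then obtain t where t: "t \<notin> V" "card {v\<in>V. v < t} = j" by auto
  let ?W = "{v\<in>V. v > t}"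
  have VU: "V = {v\<in>V. v < t} \<union> ?W" using t(1) by (auto simp: not_less order.order_iff_strict)
  have "card ({v\<in>V. v < t} \<union> ?W) \<le> card {v\<in>V. v < t} + card ?W" by (rule card_Un_le)
  then have "card V \<le> card {v\<in>V. v < t} + card ?W" using VU by simp
  then have "card ?W > 0" using Suc.prems t(2) by linarith
  then have Wne: "?W \<noteq> {}" by (metis card.empty less_irrefl)
  have finW: "finite ?W" using fin by auto
  define s where "s = Min ?W"
  have sW: "s \<in> ?W" using Min_in[OF finW Wne] s_def by simp
  have smin: "\<And>v. v \<in> ?W \<Longrightarrow> s \<le> v" using Min_le[OF finW] s_def by simp
  let ?W' = "{v\<in>V. v > s}"
  define s2 where "s2 = (if ?W' = {} then s + 1 else Min ?W')"
  have s2gt: "s2 > s"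
  proof (cases "?W' = {}")
    case False
    then have "Min ?W' \<in> ?W'" using fin by (intro Min_in) auto
    then show ?thesis using False s2_def by auto
  qed (simp add: s2_def)
  have s2min: "\<And>v. v \<in> V \<Longrightarrow> v > s \<Longrightarrow> s2 \<le> v"
  proof -
    fix v assume v: "v \<in> V" "v > s"
    then have ne: "?W' \<noteq> {}" by auto
    then have "s2 = Min ?W'" unfolding s2_def by (rule if_not_P)
    then show "s2 \<le> v" using v fin by (simp add: Min_le)
  qed
  define t' where "t' = (s + s2) / 2"
  have t'1: "s < t'" "t' < s2" using s2gt t'_def by auto
  have eq: "{v\<in>V. v < t'} = insert s {v\<in>V. v < t}"
  proof (intro set_eqI iffI)
    fix v assume v: "v \<in> {v\<in>V. v < t'}"
    show "v \<in> insert s {v\<in>V. v < t}"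
    proof (cases "v < t")
      case False
      have vV: "v \<in> V" "v < t'" using v by auto
      have "v \<noteq> t" using vV t(1) by auto
      then have "v > t" using False by auto
      then have "s \<le> v" using smin vV by auto
      moreover have "\<not> v > s"
      proof
        assume "v > s"
        then have "s2 \<le> v" using s2min vV by auto
        then show False using vV t'1 by auto
      qed
      ultimately show ?thesis by auto
    qed (use v in auto)
  next
    fix v assume "v \<in> insert s {v\<in>V. v < t}"
    then show "v \<in> {v\<in>V. v < t'}" using sW t'1 by auto
  qed
  have "t' \<notin> V"
  proof
    assume "t' \<in> V"
    then have "s2 \<le> t'" using s2min t'1 by auto
    then show False using t'1 by auto
  qed
  moreover have "card {v\<in>V. v < t'} = Suc j"
    using eq t(2) sW fin by simp
  ultimately show ?case by blast
qed




lemma divmod_K: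
  fixes K i r :: nat
  assumes "r < K"
  shows "(i * K + r) div K = i" "(i * K + r) mod K = r"
  using assms by auto

lemma snake:
  fixes R :: "'c \<Rightarrow> nat \<Rightarrow> 'r" and adj0 :: "'c \<Rightarrow> 'c \<Rightarrow> bool" and adj :: "'r \<Rightarrow> 'r \<Rightarrow> bool"
  assumes dist: "distinct cs0" and ev: "even (length cs0)" and ne: "cs0 \<noteq> []"
    and cyc0: "\<forall>i<length cs0. adj0 (cs0!i) (cs0!((i+1) mod length cs0))"
    and inj: "\<forall>C\<in>set cs0. \<forall>C'\<in>set cs0. \<forall>j\<le>k. \<forall>j'\<le>k. R C j = R C' j' \<longrightarrow> C = C' \<and> j = j'"
    and fib: "\<forall>C\<in>set cs0. \<forall>j<k. adj (R C j) (R C (Suc j)) \<and> adj (R C (Suc j)) (R C j)"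
    and ends: "\<forall>C C'. C \<in> set cs0 \<longrightarrow> C' \<in> set cs0 \<longrightarrow> adj0 C C' \<longrightarrow>
                  adj (R C k) (R C' k) \<and> adj (R C 0) (R C' 0)"
  shows "\<exists>cs. distinct cs \<and> set cs = {R C j | C j. C \<in> set cs0 \<and> j \<le> k} \<and>
           length cs = length cs0 * (k+1) \<and> (\<forall>i<length cs. adj (cs!i) (cs!((i+1) mod length cs)))"
proof -
  define m where "m = length cs0"
  define K where "K = k + 1"
  define N where "N = m * K"
  have Kpos: "K > 0" and kK: "k < K" using K_def by auto
  have mpos: "m > 0" using ne m_def by auto
  define jj where "jj i r = (if even i then r else k - r)" for i r :: nat
  define g where "g p = R (cs0 ! (p div K)) (jj (p div K) (p mod K))" for p
  define cs where "cs = map g [0..<N]"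
  have len: "length cs = N" unfolding cs_def by simp
  have nth: "cs ! p = g p" if "p < N" for p unfolding cs_def using that by simp
  have divlt: "p div K < m" if "p < N" for p
    using that unfolding N_def by (metis less_mult_imp_div_less)
  have modle: "p mod K \<le> k" for p using Kpos K_def by (metis Suc_eq_plus1 less_Suc_eq_le mod_less_divisor)
  have jjle: "jj i r \<le> k" if "r \<le> k" for i r using that unfolding jj_def by auto
  have inset: "cs0 ! i \<in> set cs0" if "i < m" for i using that m_def by auto
  have "inj_on g {0..<N}"
  proof (rule inj_onI)
    fix p q assume p: "p \<in> {0..<N}" and q: "q \<in> {0..<N}" and e: "g p = g q"
    have pq: "p < N" "q < N" using p q by auto
    have e': "R (cs0 ! (p div K)) (jj (p div K) (p mod K)) = R (cs0 ! (q div K)) (jj (q div K) (q mod K))"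
      using e unfolding g_def .
    have "cs0 ! (p div K) = cs0 ! (q div K) \<and> jj (p div K) (p mod K) = jj (q div K) (q mod K)"
      using inj[rule_format, OF inset[OF divlt[OF pq(1)]] inset[OF divlt[OF pq(2)]] jjle[OF modle] jjle[OF modle] e'] .
    then have e1: "p div K = q div K" and e2: "jj (p div K) (p mod K) = jj (q div K) (q mod K)"
      using nth_eq_iff_index_eq[OF dist] divlt[OF pq(1)] divlt[OF pq(2)] m_def by auto
    have "p mod K = q mod K"
      using e2 e1 modle[of p] modle[of q] unfolding jj_def by (auto split: if_splits)
    then show "p = q" using e1 by (metis div_mult_mod_eq)
  qed
  then have d: "distinct cs" unfolding cs_def by (simp add: distinct_map)
  have s: "set cs = {R C j | C j. C \<in> set cs0 \<and> j \<le> k}"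
  proof
    show "set cs \<subseteq> {R C j | C j. C \<in> set cs0 \<and> j \<le> k}"
    proof
      fix x assume "x \<in> set cs"
      then obtain p where p: "p < N" "x = g p" unfolding cs_def by auto
      have "cs0 ! (p div K) \<in> set cs0" using inset[OF divlt[OF p(1)]] .
      moreover have "jj (p div K) (p mod K) \<le> k" using jjle[OF modle] .
      ultimately show "x \<in> {R C j | C j. C \<in> set cs0 \<and> j \<le> k}" unfolding p(2) g_def by blast
    qed
  next
    show "{R C j | C j. C \<in> set cs0 \<and> j \<le> k} \<subseteq> set cs"
    proof
      fix x assume "x \<in> {R C j | C j. C \<in> set cs0 \<and> j \<le> k}"
      then obtain C j where x: "x = R C j" "C \<in> set cs0" "j \<le> k" by blast
      then obtain i where i: "i < m" "cs0 ! i = C" using m_def by (metis in_set_conv_nth)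
      define r where "r = jj i j"
      have r: "r < K" using x(3) jjle kK r_def by (meson le_less_trans)
      define p where "p = i * K + r"
      have pd: "p div K = i" "p mod K = r" using divmod_K[OF r] p_def by auto
      have "p < N" unfolding N_def using div_less_iff_less_mult[OF Kpos, of p m] pd(1) i(1) by simp
      moreover have "g p = x"
        unfolding g_def pd using x i r_def jj_def by auto
      ultimately show "x \<in> set cs" unfolding cs_def by auto
    qed
  qed
  have a: "\<forall>p<length cs. adj (cs!p) (cs!((p+1) mod length cs))"
  proof (intro allI impI)
    fix p assume "p < length cs"
    then have p: "p < N" using len by simp
    define i where "i = p div K"
    define r where "r = p mod K"
    have pe: "p = i * K + r" unfolding i_def r_def by simp
    have im: "i < m" using divlt[OF p] i_def by simp
    have Ci: "cs0 ! i \<in> set cs0" using inset[OF im] .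
    show "adj (cs!p) (cs!((p+1) mod length cs))"
    proof (cases "r < k")
      case True
      have r1: "r + 1 < K" using True K_def by simp
      have p1: "p + 1 = i * K + (r+1)" using pe by simp
      have p1d: "(p+1) div K = i" "(p+1) mod K = r + 1" using divmod_K[OF r1] p1 by auto
      have p1N: "p + 1 < N"
      proof -
        have "(p+1) div K < m" using p1d im by simp
        then show ?thesis unfolding N_def using div_less_iff_less_mult[OF Kpos, of "p+1" m] by simp
      qed
      then have mN: "(p+1) mod length cs = p + 1" using len by simp
      have gp: "g p = R (cs0!i) (jj i r)" unfolding g_def i_def r_def by simp
      have gp1: "g (p+1) = R (cs0!i) (jj i (r+1))" unfolding g_def using p1d by simp
      show ?thesis
      proof (cases "even i")
        case True
        then show ?thesis using fib Ci \<open>r < k\<close> nth[OF p] nth[OF p1N] mN gp gp1 unfolding jj_def by auto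
      next
        case False
        have e: "k - r = Suc (k - (r+1))" using \<open>r < k\<close> by simp
        have "k - (r+1) < k" using \<open>r < k\<close> by simp
        then have "adj (R (cs0!i) (Suc (k - (r+1)))) (R (cs0!i) (k - (r+1)))" using fib Ci by blast
        then show ?thesis using False nth[OF p] nth[OF p1N] mN gp gp1 e unfolding jj_def by auto
      qed
    next
      case False
      then have rk: "r = k" using modle r_def by (simp add: le_antisym)
      have p1: "p + 1 = (i+1) * K" using pe rk K_def by simp
      have gp: "g p = R (cs0!i) (jj i k)" unfolding g_def i_def using rk r_def by simp
      show ?thesis
      proof (cases "i + 1 < m")
        case True
        have p1d: "(p+1) div K = i+1" "(p+1) mod K = 0" using p1 Kpos by auto
        have p1N: "p + 1 < N" unfolding N_def using mult_less_mono1[OF True Kpos] p1 by simp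
        then have mN: "(p+1) mod length cs = p + 1" using len by simp
        have gp1: "g (p+1) = R (cs0!(i+1)) (jj (i+1) 0)" unfolding g_def using p1d by simp
        have ad: "adj0 (cs0!i) (cs0!(i+1))" using cyc0 im True m_def by (metis mod_less)
        have C1: "cs0!(i+1) \<in> set cs0" using inset[OF True] .
        have "adj (R (cs0 ! i) k) (R (cs0 ! (i+1)) k) \<and> adj (R (cs0 ! i) 0) (R (cs0 ! (i+1)) 0)"
          using ends Ci C1 ad by blast
        then show ?thesis using nth[OF p] nth[OF p1N] mN gp gp1 unfolding jj_def by auto
      next
        case False
        then have im1: "i + 1 = m" using im by simp
        then have oi: "odd i" using ev m_def by (metis even_add odd_one)
        have "p + 1 = N" using p1 im1 N_def by (metis mult.commute)
        then have mN: "(p+1) mod length cs = 0" using len by simp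
        have N0: "0 < N" using p by simp
        have g0: "g 0 = R (cs0!0) 0" unfolding g_def jj_def by simp
        have ad: "adj0 (cs0!i) (cs0!0)" using cyc0 im im1 m_def by (metis mod_self)
        have C0: "cs0!0 \<in> set cs0" using inset mpos by simp
        have "adj (R (cs0 ! i) 0) (R (cs0 ! 0) 0)"
          using ends Ci C0 ad by blast
        then show ?thesis using nth[OF p] nth[OF N0] mN gp g0 oi unfolding jj_def by auto
      qed
    qed
  qed
  show ?thesis using d s a len N_def m_def K_def by blast
qed




definition cyc :: "'a::euclidean_space set set \<Rightarrow> 'a set list \<Rightarrow> bool" where
  "cyc A cs \<longleftrightarrow> distinct cs \<and> set cs = regions A \<and> even (length cs) \<and>
     (\<forall>i < length cs. region_adj A (cs ! i) (cs ! ((i + 1) mod length cs)))"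

lemma adj_sym: "region_adj A R S \<Longrightarrow> region_adj A S R"
proof -
  assume a: "region_adj A R S"
  have "{H\<in>A. separates H S R} = {H\<in>A. separates H R S}"
    unfolding separates_def by blast
  then show ?thesis using a unfolding region_adj_def by simp
qed

locale core =
  fixes A A0 A1 :: "'a::euclidean_space set set" and nr :: "'a set \<Rightarrow> 'a" and v :: 'a
  assumes g: "goodnrm nr A" and fin: "finite A" and sub: "A0 \<subseteq> A" and A1: "A1 = A - A0"
    and v0: "\<forall>H\<in>A0. nr H \<bullet> v = 0" and v1: "\<forall>H\<in>A1. nr H \<bullet> v = 1"
    and modu: "\<forall>H\<in>A1. \<forall>H'\<in>A1. H \<noteq> H' \<longrightarrow> (\<exists>H0\<in>A0. H \<inter> H' \<subseteq> H0)"
begin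

lemma g0: "goodnrm nr A0" using goodnrm_subset[OF g sub] .
lemma g1: "goodnrm nr A1" using goodnrm_subset[OF g] A1 by auto
lemma fin1: "finite A1" using fin A1 by auto

lemma fin_sv1: "finite (sv nr A1 z)"
proof -
  have "sv nr A1 z \<subseteq> A1" unfolding sv_def by auto
  then show ?thesis using fin1 finite_subset by blast
qed

lemma svA: "sv nr A z = sv nr A0 z \<union> sv nr A1 z"
  unfolding sv_def using sub A1 by auto

lemma sv0: "sv nr A0 z = sv nr A z \<inter> A0"
  unfolding sv_def using sub by auto
lemma sv1: "sv nr A1 z = sv nr A z \<inter> A1"
  unfolding sv_def using A1 by auto

lemma UA: "z \<notin> \<Union>A \<longleftrightarrow> z \<notin> \<Union>A0 \<and> z \<notin> \<Union>A1"
  using sub A1 by auto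

lemma reg0_sub: "C \<in> regions A0 \<Longrightarrow> C \<subseteq> - \<Union>A0"
  unfolding regions_def by (rule in_components_subset)

lemma reg0_conn: "C \<in> regions A0 \<Longrightarrow> connected C"
  unfolding regions_def by (rule in_components_connected)

lemma C1:
  assumes C: "C \<in> regions A0" and z: "z \<in> C" and H: "H \<in> A1" and H': "H' \<in> A1" and ne: "H \<noteq> H'"
  shows "nr H \<bullet> z \<noteq> nr H' \<bullet> z"
proof
  assume e: "nr H \<bullet> z = nr H' \<bullet> z"
  obtain H0 where H0: "H0 \<in> A0" "H \<inter> H' \<subseteq> H0" using modu H H' ne by blast
  define w where "w = z - (nr H \<bullet> z) *\<^sub>R v"
  have "nr H \<bullet> w = 0" unfolding w_def using v1 H by (simp add: inner_diff_right)
  moreover have "nr H' \<bullet> w = 0" unfolding w_def using v1 H' e by (simp add: inner_diff_right)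
  ultimately have "w \<in> H \<inter> H'" using goodnrm_mem[OF g1] H H' by auto
  then have "w \<in> H0" using H0 by auto
  then have "nr H0 \<bullet> w = 0" using goodnrm_mem[OF g0 H0(1)] by auto
  moreover have "nr H0 \<bullet> w = nr H0 \<bullet> z" unfolding w_def using v0 H0 by (simp add: inner_diff_right)
  moreover have "z \<notin> H0" using reg0_sub[OF C] z H0 by auto
  ultimately show False using goodnrm_mem[OF g0 H0(1)] by auto
qed

lemma C2:
  assumes C: "C \<in> regions A0" and y: "y \<in> C" and z: "z \<in> C"
  shows "sv nr A1 y \<subseteq> sv nr A1 z \<or> sv nr A1 z \<subseteq> sv nr A1 y"
proof (rule ccontr)
  assume "\<not> ?thesis"
  then obtain H H' where H: "H \<in> sv nr A1 y" "H \<notin> sv nr A1 z" and H': "H' \<in> sv nr A1 z" "H' \<notin> sv nr A1 y"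
    by blast
  have HA: "H \<in> A1" "H' \<in> A1" using H H' unfolding sv_def by auto
  have ne: "H \<noteq> H'" using H H' by auto
  have i: "nr H \<bullet> y > 0" "nr H \<bullet> z \<le> 0" "nr H' \<bullet> z > 0" "nr H' \<bullet> y \<le> 0"
    using H H' HA unfolding sv_def by auto
  have "(nr H' - nr H) \<bullet> y \<le> 0" "0 \<le> (nr H' - nr H) \<bullet> z" using i by (auto simp: inner_diff_left)
  then obtain w where w: "w \<in> C" "(nr H' - nr H) \<bullet> w = 0"
    using connected_ivt_hyperplane[OF reg0_conn[OF C] y z] by blast
  then have "nr H \<bullet> w = nr H' \<bullet> w" by (simp add: inner_diff_left)
  then show False using C1[OF C w(1) HA ne] by simp
qed

definition R :: "'a set \<Rightarrow> nat \<Rightarrow> 'a set" where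
  "R C j = {z. z \<notin> \<Union>A \<and> z \<in> C \<and> card (sv nr A1 z) = j}"

lemma rg0_reg: "y \<notin> \<Union>A0 \<Longrightarrow> rg A0 y \<in> regions A0"
  unfolding regions_rg by auto

lemma rg0_of_mem: "C \<in> regions A0 \<Longrightarrow> y \<in> C \<Longrightarrow> rg A0 y = C"
  unfolding regions_def rg_def components_def using connected_component_eq by blast

lemma C3:
  assumes y: "y \<notin> \<Union>A"
  shows "rg A y = R (rg A0 y) (card (sv nr A1 y))"
proof -
  have y0: "y \<notin> \<Union>A0" using y UA by auto
  have Creg: "rg A0 y \<in> regions A0" using rg0_reg[OF y0] .
  have yC: "y \<in> rg A0 y" using rg_self[OF y0] .
  show ?thesis
  proof (intro set_eqI iffI)
    fix z assume "z \<in> rg A y"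
    then have z: "z \<notin> \<Union>A" "sv nr A z = sv nr A y" using rg_mem[OF g y] by auto
    have z0: "z \<notin> \<Union>A0" using z UA by auto
    have "sv nr A0 z = sv nr A0 y" using z sv0 by metis
    then have "z \<in> rg A0 y" using rg_mem[OF g0 y0] z0 by auto
    moreover have "sv nr A1 z = sv nr A1 y" using z sv1 by metis
    ultimately show "z \<in> R (rg A0 y) (card (sv nr A1 y))" unfolding R_def using z by auto
  next
    fix z assume "z \<in> R (rg A0 y) (card (sv nr A1 y))"
    then have z: "z \<notin> \<Union>A" "z \<in> rg A0 y" "card (sv nr A1 z) = card (sv nr A1 y)" unfolding R_def by auto
    have z0: "z \<notin> \<Union>A0" using z UA by auto
    have e0: "sv nr A0 z = sv nr A0 y" using rg_mem[OF g0 y0] z by auto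
    have fs: "finite (sv nr A1 z)" "finite (sv nr A1 y)" using fin_sv1 by auto
    have "sv nr A1 z = sv nr A1 y"
      using C2[OF Creg yC z(2)] card_subset_eq[OF fs(1)] card_subset_eq[OF fs(2)] z(3) by metis
    then have "sv nr A z = sv nr A y" using e0 svA by simp
    then show "z \<in> rg A y" using rg_mem[OF g y] z by auto
  qed
qed

lemma C4:
  assumes C: "C \<in> regions A0" and j: "j \<le> card A1"
  shows "\<exists>y. y \<notin> \<Union>A \<and> y \<in> C \<and> card (sv nr A1 y) = j"
proof -
  obtain p where p: "p \<notin> \<Union>A0" "C = rg A0 p" using C unfolding regions_rg by auto
  have pC: "p \<in> C" using p rg_self by auto
  define cf where "cf H = - (nr H \<bullet> p)" for H
  have inj: "inj_on cf A1"
    unfolding inj_on_def cf_def using C1[OF C pC] by fastforce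
  define V where "V = cf ` A1"
  have cV: "card V = card A1" unfolding V_def using card_image[OF inj] .
  have fV: "finite V" unfolding V_def using fin1 by auto
  obtain t where t: "t \<notin> V" "card {c\<in>V. c < t} = j" using count_exists[OF fV] j cV by auto
  define y where "y = p + t *\<^sub>R v"
  have y0v: "nr H \<bullet> y = nr H \<bullet> p" if "H \<in> A0" for H
    unfolding y_def using v0 that by (simp add: inner_add_right)
  have y1v: "nr H \<bullet> y = t - cf H" if "H \<in> A1" for H
    unfolding y_def cf_def using v1 that by (simp add: inner_add_right)
  have y0: "y \<notin> \<Union>A0" using p(1) y0v notin_Union[OF g0] by auto
  have y1: "y \<notin> \<Union>A1"
  proof -
    have "nr H \<bullet> y \<noteq> 0" if "H \<in> A1" for H
      using y1v[OF that] t(1) that unfolding V_def by auto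
    then show ?thesis using notin_Union[OF g1] by auto
  qed
  have "sv nr A0 y = sv nr A0 p" unfolding sv_def using y0v by auto
  then have yC: "y \<in> C" using rg_mem[OF g0 p(1)] y0 p(2) by auto
  have s1: "sv nr A1 y = {H\<in>A1. cf H < t}" unfolding sv_def using y1v by auto
  have "{c\<in>V. c < t} = cf ` {H\<in>A1. cf H < t}" unfolding V_def by auto
  moreover have "inj_on cf {H\<in>A1. cf H < t}" using inj by (rule inj_on_subset) auto
  ultimately have "card (sv nr A1 y) = j" using s1 t(2) card_image by metis
  then show ?thesis using y0 y1 UA yC by blast
qed

lemma C5:
  assumes C: "C \<in> regions A0" and j: "j \<le> card A1"
  shows "\<exists>y. y \<notin> \<Union>A \<and> y \<in> C \<and> R C j = rg A y"
proof -
  obtain y where y: "y \<notin> \<Union>A" "y \<in> C" "card (sv nr A1 y) = j" using C4[OF C j] by blast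
  have "rg A0 y = C" using rg0_of_mem[OF C y(2)] .
  then show ?thesis using C3[OF y(1)] y by auto
qed

lemma regionsA: "regions A = {R C j | C j. C \<in> regions A0 \<and> j \<le> card A1}"
proof
  show "regions A \<subseteq> {R C j | C j. C \<in> regions A0 \<and> j \<le> card A1}"
  proof
    fix X assume "X \<in> regions A"
    then obtain y where y: "y \<notin> \<Union>A" "X = rg A y" unfolding regions_rg by auto
    have y0: "y \<notin> \<Union>A0" using y UA by auto
    have "card (sv nr A1 y) \<le> card A1" using fin1 unfolding sv_def by (intro card_mono) auto
    then show "X \<in> {R C j | C j. C \<in> regions A0 \<and> j \<le> card A1}"
      using C3[OF y(1)] y(2) rg0_reg[OF y0] by blast
  qed
next
  show "{R C j | C j. C \<in> regions A0 \<and> j \<le> card A1} \<subseteq> regions A"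
  proof
    fix X assume "X \<in> {R C j | C j. C \<in> regions A0 \<and> j \<le> card A1}"
    then obtain C j where X: "X = R C j" "C \<in> regions A0" "j \<le> card A1" by blast
    then obtain y where "y \<notin> \<Union>A" "R C j = rg A y" using C5 by blast
    then show "X \<in> regions A" unfolding regions_rg using X by auto
  qed
qed

lemma R_inj:
  assumes C: "C \<in> regions A0" "C' \<in> regions A0" and j: "j \<le> card A1" "j' \<le> card A1"
    and e: "R C j = R C' j'"
  shows "C = C' \<and> j = j'"
proof -
  obtain y where y: "y \<notin> \<Union>A" "y \<in> C" "R C j = rg A y" using C5[OF C(1) j(1)] by blast
  have "y \<in> R C j" using y rg_self by auto
  then have "y \<in> R C' j'" "y \<in> R C j" using e by auto
  then have yC': "y \<in> C'" and "card (sv nr A1 y) = j'" "card (sv nr A1 y) = j" unfolding R_def by auto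
  moreover have "rg A0 y = C" "rg A0 y = C'" using rg0_of_mem[OF C(1) y(2)] rg0_of_mem[OF C(2) yC'] by auto
  ultimately show ?thesis by simp
qed

lemma symdiff_aux:
  assumes "P \<subseteq> X0" "Q \<subseteq> X1" "P' \<subseteq> X0" "Q' \<subseteq> X1" "X0 \<inter> X1 = {}"
  shows "((P\<union>Q) - (P'\<union>Q')) \<union> ((P'\<union>Q') - (P\<union>Q)) = ((P-P') \<union> (P'-P)) \<union> ((Q-Q') \<union> (Q'-Q))"
  using assms by blast

lemma symdiff_A:
  "(sv nr A y - sv nr A z) \<union> (sv nr A z - sv nr A y) =
   ((sv nr A0 y - sv nr A0 z) \<union> (sv nr A0 z - sv nr A0 y)) \<union> ((sv nr A1 y - sv nr A1 z) \<union> (sv nr A1 z - sv nr A1 y))"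
proof -
  have "sv nr A0 y \<subseteq> A0" "sv nr A1 y \<subseteq> A1" "sv nr A0 z \<subseteq> A0" "sv nr A1 z \<subseteq> A1" unfolding sv_def by auto
  moreover have "A0 \<inter> A1 = {}" using A1 by auto
  ultimately show ?thesis unfolding svA[of y] svA[of z] by (rule symdiff_aux)
qed

lemma adj_fib:
  assumes C: "C \<in> regions A0" and j: "j < card A1"
  shows "region_adj A (R C j) (R C (Suc j))"
proof -
  have jl: "j \<le> card A1" "Suc j \<le> card A1" using j by auto
  obtain y where y: "y \<notin> \<Union>A" "y \<in> C" "R C j = rg A y" using C5[OF C jl(1)] by blast
  obtain z where z: "z \<notin> \<Union>A" "z \<in> C" "R C (Suc j) = rg A z" using C5[OF C jl(2)] by blast
  have cy: "card (sv nr A1 y) = j" using y rg_self[OF y(1)] unfolding R_def by auto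
  have cz: "card (sv nr A1 z) = Suc j" using z rg_self[OF z(1)] unfolding R_def by auto
  have y0: "y \<notin> \<Union>A0" "z \<notin> \<Union>A0" using y z UA by auto
  have "rg A0 y = rg A0 z" using rg0_of_mem[OF C y(2)] rg0_of_mem[OF C z(2)] by simp
  then have e0: "sv nr A0 y = sv nr A0 z" using rg_eq_iff[OF g0 y0] by simp
  have fs: "finite (sv nr A1 z)" "finite (sv nr A1 y)" by (rule fin_sv1)+
  have ss: "sv nr A1 y \<subseteq> sv nr A1 z"
  proof -
    have "\<not> sv nr A1 z \<subseteq> sv nr A1 y"
    proof
      assume "sv nr A1 z \<subseteq> sv nr A1 y"
      then have "card (sv nr A1 z) \<le> card (sv nr A1 y)" using card_mono[OF fs(2)] by blast
      then show False using cy cz by simp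
    qed
    then show ?thesis using C2[OF C y(2) z(2)] by blast
  qed
  have "(sv nr A y - sv nr A z) \<union> (sv nr A z - sv nr A y) = sv nr A1 z - sv nr A1 y"
    unfolding symdiff_A e0 using ss by blast
  moreover have "card (sv nr A1 z - sv nr A1 y) = 1" using card_Diff_subset[OF fs(2) ss] cy cz by simp
  ultimately show ?thesis using adj_iff[OF g y(1) z(1)] y(3) z(3) by simp
qed

lemma adj_ends:
  assumes C: "C \<in> regions A0" "C' \<in> regions A0" and a: "region_adj A0 C C'"
    and j: "j = 0 \<or> j = card A1"
  shows "region_adj A (R C j) (R C' j)"
proof -
  have jl: "j \<le> card A1" using j by auto
  obtain y where y: "y \<notin> \<Union>A" "y \<in> C" "R C j = rg A y" using C5[OF C(1) jl] by blast
  obtain z where z: "z \<notin> \<Union>A" "z \<in> C'" "R C' j = rg A z" using C5[OF C(2) jl] by blast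
  have cy: "card (sv nr A1 y) = j" using y rg_self[OF y(1)] unfolding R_def by auto
  have cz: "card (sv nr A1 z) = j" using z rg_self[OF z(1)] unfolding R_def by auto
  have fs: "finite (sv nr A1 z)" "finite (sv nr A1 y)" by (rule fin_sv1)+
  have ssA: "sv nr A1 z \<subseteq> A1" "sv nr A1 y \<subseteq> A1" unfolding sv_def by auto
  have e1: "sv nr A1 y = sv nr A1 z"
  proof (cases "j = 0")
    case True
    then have "sv nr A1 y = {}" "sv nr A1 z = {}" using cy cz fs by auto
    then show ?thesis by simp
  next
    case False
    then have jj: "j = card A1" using j by auto
    have "sv nr A1 y = A1" using card_subset_eq[OF fin1 ssA(2)] cy jj by simp
    moreover have "sv nr A1 z = A1" using card_subset_eq[OF fin1 ssA(1)] cz jj by simp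
    ultimately show ?thesis by simp
  qed
  have y0: "y \<notin> \<Union>A0" "z \<notin> \<Union>A0" using y z UA by auto
  have "rg A0 y = C" using rg0_of_mem[OF C(1) y(2)] .
  moreover have "rg A0 z = C'" using rg0_of_mem[OF C(2) z(2)] .
  ultimately have "card ((sv nr A0 y - sv nr A0 z) \<union> (sv nr A0 z - sv nr A0 y)) = 1"
    using adj_iff[OF g0 y0] a by simp
  moreover have "(sv nr A y - sv nr A z) \<union> (sv nr A z - sv nr A y) =
      (sv nr A0 y - sv nr A0 z) \<union> (sv nr A0 z - sv nr A0 y)"
    unfolding symdiff_A e1 by blast
  ultimately show ?thesis using adj_iff[OF g y(1) z(1)] y(3) z(3) by simp
qed

theorem core_cyc:
  assumes c0: "cyc A0 cs0" and ne: "cs0 \<noteq> []"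
  shows "\<exists>cs. cyc A cs \<and> length cs = length cs0 * (card A1 + 1)"
proof -
  have c0': "distinct cs0" "set cs0 = regions A0" "even (length cs0)"
    "\<forall>i<length cs0. region_adj A0 (cs0!i) (cs0!((i+1) mod length cs0))"
    using c0 unfolding cyc_def by auto
  have P5: "\<forall>C\<in>set cs0. \<forall>C'\<in>set cs0. \<forall>j\<le>card A1. \<forall>j'\<le>card A1. R C j = R C' j' \<longrightarrow> C = C' \<and> j = j'"
    unfolding c0'(2) using R_inj by blast
  have P6: "\<forall>C\<in>set cs0. \<forall>j<card A1. region_adj A (R C j) (R C (Suc j)) \<and> region_adj A (R C (Suc j)) (R C j)"
    unfolding c0'(2) using adj_fib adj_sym by blast
  have P7: "\<forall>C C'. C \<in> set cs0 \<longrightarrow> C' \<in> set cs0 \<longrightarrow> region_adj A0 C C' \<longrightarrow>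
                  region_adj A (R C (card A1)) (R C' (card A1)) \<and> region_adj A (R C 0) (R C' 0)"
    unfolding c0'(2) using adj_ends by blast
  have ex: "\<exists>cs. distinct cs \<and> set cs = {R C j | C j. C \<in> set cs0 \<and> j \<le> card A1} \<and>
           length cs = length cs0 * (card A1 + 1) \<and> (\<forall>i<length cs. region_adj A (cs!i) (cs!((i+1) mod length cs)))"
    by (rule snake[OF c0'(1) c0'(3) ne c0'(4) P5 P6 P7])
  then obtain cs where cs: "distinct cs" "set cs = {R C j | C j. C \<in> set cs0 \<and> j \<le> card A1}"
     "length cs = length cs0 * (card A1 + 1)" "\<forall>i<length cs. region_adj A (cs!i) (cs!((i+1) mod length cs))"
    by blast
  have "set cs = regions A" using cs(2) c0'(2) regionsA by simp
  moreover have "even (length cs)" using cs(3) c0'(3) by simp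
  ultimately show ?thesis using cs unfolding cyc_def by blast
qed

end




lemma in_span_of_orth:
  fixes c :: "'a::euclidean_space"
  assumes h: "\<And>x. (\<forall>a\<in>S. a \<bullet> x = 0) \<Longrightarrow> c \<bullet> x = 0"
  shows "c \<in> span S"
proof -
  obtain y z where y: "y \<in> span S" and z: "\<And>w. w \<in> span S \<Longrightarrow> orthogonal z w" and c: "c = y + z"
    using orthogonal_subspace_decomp_exists[of S c] by metis
  have "a \<bullet> z = 0" if "a \<in> S" for a
    using z[OF span_base[OF that]] unfolding orthogonal_def by (simp add: inner_commute)
  then have "c \<bullet> z = 0" using h by blast
  moreover have "y \<bullet> z = 0" using z[OF y] unfolding orthogonal_def by (simp add: inner_commute)
  ultimately have "z \<bullet> z = 0" unfolding c by (simp add: inner_add_left)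
  then have "z = 0" by simp
  then show ?thesis using c y by simp
qed

lemma parallel_of_hyp:
  fixes a b :: "'a::euclidean_space"
  assumes "{x. a \<bullet> x = 0} \<subseteq> {x. b \<bullet> x = 0}"
  shows "\<exists>k. b = k *\<^sub>R a"
proof -
  have "b \<in> span {a}" using assms by (intro in_span_of_orth) auto
  then show ?thesis unfolding span_singleton by auto
qed

lemma hyp_scale:
  fixes a :: "'a::euclidean_space"
  assumes "k \<noteq> 0"
  shows "{x. (k *\<^sub>R a) \<bullet> x = 0} = {x. a \<bullet> x = 0}"
  using assms by auto

definition NS :: "'a::euclidean_space set set \<Rightarrow> 'a set" where
  "NS A = {a. a \<noteq> 0 \<and> {x. a \<bullet> x = 0} \<in> A}"

lemma rank_NS: "arr_rank A = dim (NS A)"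
  unfolding arr_rank_def NS_def ..

lemma nr_in_NS: "goodnrm nr A \<Longrightarrow> H \<in> A \<Longrightarrow> nr H \<in> NS A"
  unfolding goodnrm_def NS_def by auto

lemma NS_scale:
  assumes g: "goodnrm nr A" and a: "a \<in> NS A"
  shows "\<exists>H\<in>A. \<exists>k. k \<noteq> 0 \<and> a = k *\<^sub>R nr H"
proof -
  define H where "H = {x. a \<bullet> x = 0}"
  have H: "H \<in> A" "a \<noteq> 0" using a unfolding NS_def H_def by auto
  have "H = {x. nr H \<bullet> x = 0}" using g H unfolding goodnrm_def by auto
  then obtain k where "a = k *\<^sub>R nr H" using parallel_of_hyp[of "nr H" a] H_def by auto
  moreover have "k \<noteq> 0" using H calculation by auto
  ultimately show ?thesis using H by blast
qed

lemma same_hyp: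
  assumes g: "goodnrm nr A" and H: "H \<in> A" "H' \<in> A" and e: "nr H' = k *\<^sub>R nr H"
  shows "H' = H"
proof -
  have "k \<noteq> 0" using g H e unfolding goodnrm_def by auto
  then have "{x. nr H' \<bullet> x = 0} = {x. nr H \<bullet> x = 0}" using e hyp_scale by simp
  then show ?thesis using g H unfolding goodnrm_def by auto
qed

lemma distinct_not_span:
  assumes g: "goodnrm nr A" and H: "H \<in> A" "H' \<in> A" and ne: "H \<noteq> H'"
  shows "nr H' \<notin> span {nr H}"
proof
  assume "nr H' \<in> span {nr H}"
  then obtain k where "nr H' = k *\<^sub>R nr H" unfolding span_singleton by auto
  then show False using same_hyp[OF g H] ne by auto
qed

lemma core_apply:
  fixes A A0 A1 :: "'a::euclidean_space set set"
  assumes g: "goodnrm nr A" and fin: "finite A" and sub: "A0 \<subseteq> A" and A1: "A1 = A - A0"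
    and v0: "\<forall>H\<in>A0. nr H \<bullet> v = 0" and v1: "\<forall>H\<in>A1. nr H \<bullet> v \<noteq> 0"
    and modu: "\<forall>H\<in>A1. \<forall>H'\<in>A1. H \<noteq> H' \<longrightarrow> (\<exists>H0\<in>A0. H \<inter> H' \<subseteq> H0)"
    and c0: "cyc A0 cs0" and ne: "cs0 \<noteq> []"
  shows "\<exists>cs. cyc A cs \<and> length cs = length cs0 * (card A1 + 1)"
proof -
  define nr' where "nr' H = (if H \<in> A1 then (1 / (nr H \<bullet> v)) *\<^sub>R nr H else nr H)" for H
  have g': "goodnrm nr' A"
    unfolding goodnrm_def
  proof
    fix H assume H: "H \<in> A"
    show "nr' H \<noteq> 0 \<and> H = {x. nr' H \<bullet> x = 0}"
    proof (cases "H \<in> A1")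
      case True
      have k: "1 / (nr H \<bullet> v) \<noteq> 0" using v1 True by simp
      have "nr' H = (1 / (nr H \<bullet> v)) *\<^sub>R nr H" using True nr'_def by simp
      then show ?thesis using hyp_scale[OF k, of "nr H"] g H k unfolding goodnrm_def by auto
    next
      case False
      then show ?thesis using g H unfolding goodnrm_def nr'_def by auto
    qed
  qed
  have v0': "\<forall>H\<in>A0. nr' H \<bullet> v = 0" using v0 A1 unfolding nr'_def by auto
  have v1': "\<forall>H\<in>A1. nr' H \<bullet> v = 1" using v1 unfolding nr'_def by auto
  interpret core A A0 A1 nr' v
    by unfold_locales (use g' fin sub A1 v0' v1' modu in auto)
  show ?thesis using core_cyc[OF c0 ne] .
qed

lemma rank1_cyc:
  fixes H0 :: "'a::euclidean_space set"
  assumes g: "goodnrm nr {H0}"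
  shows "\<exists>cs. cyc {H0} cs \<and> length cs = 2"
proof -
  define p where "p = nr H0"
  have p0: "p \<noteq> 0" and H0: "H0 = {x. p \<bullet> x = 0}" using g unfolding goodnrm_def p_def by auto
  have pp: "p \<bullet> p > 0" using p0 by simp
  have n1: "p \<notin> \<Union>{H0}" "-p \<notin> \<Union>{H0}" using pp H0 by auto
  have pp': "\<not> (nr H0 \<bullet> (-p) > 0)"
  proof -
    have "nr H0 \<bullet> (-p) = -(p \<bullet> p)" using p_def by simp
    then show ?thesis using pp by linarith
  qed
  have s1: "sv nr {H0} p = {H0}" "sv nr {H0} (-p) = {}" using pp pp' unfolding sv_def p_def by auto
  define cs where "cs = [rg {H0} p, rg {H0} (-p)]"
  have d: "rg {H0} p \<noteq> rg {H0} (-p)" using rg_eq_iff[OF g n1] s1 by simp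
  have sd: "card ((sv nr {H0} p - sv nr {H0} (-p)) \<union> (sv nr {H0} (-p) - sv nr {H0} p)) = 1"
    using s1 by simp
  have a1: "region_adj {H0} (rg {H0} p) (rg {H0} (-p))" using adj_iff[OF g n1] sd by simp
  have a2: "region_adj {H0} (rg {H0} (-p)) (rg {H0} p)" using adj_sym[OF a1] .
  have "regions {H0} = {rg {H0} p, rg {H0} (-p)}"
  proof
    show "regions {H0} \<subseteq> {rg {H0} p, rg {H0} (-p)}"
    proof
      fix X assume "X \<in> regions {H0}"
      then obtain z where z: "z \<notin> \<Union>{H0}" "X = rg {H0} z" unfolding regions_rg by auto
      have "sv nr {H0} z = {H0} \<or> sv nr {H0} z = {}" unfolding sv_def by auto
      then show "X \<in> {rg {H0} p, rg {H0} (-p)}"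
        using rg_eq_iff[OF g z(1) n1(1)] rg_eq_iff[OF g z(1) n1(2)] s1 z(2) by auto
    qed
  next
    show "{rg {H0} p, rg {H0} (-p)} \<subseteq> regions {H0}" unfolding regions_rg using n1 by auto
  qed
  then have "cyc {H0} cs"
    unfolding cyc_def cs_def using d a1 a2 by (auto simp: less_Suc_eq nth_Cons')
  then show ?thesis unfolding cs_def by auto
qed

definition nrA :: "'a::euclidean_space set \<Rightarrow> 'a" where
  "nrA H = (SOME a. a \<noteq> 0 \<and> H = {x. a \<bullet> x = 0})"

lemma nrA_good:
  assumes "arrangement A" shows "goodnrm nrA A"
  unfolding goodnrm_def
proof
  fix H assume "H \<in> A"
  then have "\<exists>a. a \<noteq> 0 \<and> H = {x. a \<bullet> x = 0}"
    using assms unfolding arrangement_def linear_hyperplane_def by blast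
  then show "nrA H \<noteq> 0 \<and> H = {x. nrA H \<bullet> x = 0}" unfolding nrA_def by (rule someI_ex)
qed




lemma base_case:
  fixes A :: "'a::euclidean_space set set"
  assumes arr: "arrangement A" and r: "arr_rank A = 2"
  shows "\<exists>cs. cyc A cs \<and> length cs \<ge> 4"
proof -
  define nr :: "'a set \<Rightarrow> 'a" where "nr = nrA"
  have g: "goodnrm nr A" using nrA_good[OF arr] nr_def by simp
  have fin: "finite A" using arr unfolding arrangement_def by simp
  have dN: "dim (NS A) = 2" using r unfolding rank_NS by simp
  have "A \<noteq> {}"
  proof
    assume "A = {}"
    then have "NS A = {}" unfolding NS_def by auto
    then show False using dN by simp
  qed
  then obtain H0 where H0: "H0 \<in> A" by blast
  define a0 where "a0 = nr H0"
  have "\<not> NS A \<subseteq> span {a0}"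
  proof
    assume "NS A \<subseteq> span {a0}"
    then have "dim (NS A) \<le> card {a0}" by (intro dim_le_card) auto
    then show False using dN by simp
  qed
  then obtain a where a: "a \<in> NS A" "a \<notin> span {a0}" by blast
  obtain H1 k where H1: "H1 \<in> A" "k \<noteq> 0" "a = k *\<^sub>R nr H1" using NS_scale[OF g a(1)] by blast
  have n1: "nr H1 \<notin> span {a0}"
  proof
    assume "nr H1 \<in> span {a0}"
    then have "a \<in> span {a0}" using H1(3) span_scale by blast
    then show False using a(2) by simp
  qed
  have H10: "H1 \<noteq> H0" using n1 a0_def span_base by blast
  obtain w v where w: "w \<in> span {a0}" and v: "\<And>x. x \<in> span {a0} \<Longrightarrow> orthogonal v x"
    and dec: "nr H1 = w + v"
    using orthogonal_subspace_decomp_exists[of "{a0}" "nr H1"] by metis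
  have va0: "a0 \<bullet> v = 0" using v[of a0] span_base[of a0 "{a0}"] unfolding orthogonal_def
    by (simp add: inner_commute)
  have v0: "v \<noteq> 0" using dec w n1 by auto
  have wv: "w \<bullet> v = 0" using v[OF w] unfolding orthogonal_def by (simp add: inner_commute)
  have h1v: "nr H1 \<bullet> v \<noteq> 0" using dec wv v0 by (simp add: inner_add_left)
  have span2: "span {nr H', nr H} = span (NS A)" if H: "H \<in> A" "H' \<in> A" "H \<noteq> H'" for H H'
  proof -
    have nz: "nr H \<noteq> 0" using g H unfolding goodnrm_def by auto
    have i1: "independent {nr H}" using independent_insertI[of "nr H" "{}"] nz by simp
    have ns: "nr H' \<notin> span {nr H}" using distinct_not_span[OF g H] .
    have i2: "independent {nr H', nr H}" using independent_insertI[OF ns i1] .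
    have ne: "nr H' \<noteq> nr H" using ns span_base by blast
    have "dim {nr H', nr H} = 2" using dim_eq_card_independent[OF i2] ne by simp
    moreover have "{nr H', nr H} \<subseteq> NS A" using nr_in_NS[OF g] H by auto
    ultimately show ?thesis using dim_eq_span[of "{nr H', nr H}" "NS A"] dN by simp
  qed
  have v1: "\<forall>H\<in>A - {H0}. nr H \<bullet> v \<noteq> 0"
  proof
    fix H assume H: "H \<in> A - {H0}"
    show "nr H \<bullet> v \<noteq> 0"
    proof
      assume hv: "nr H \<bullet> v = 0"
      have "nr H1 \<in> span (NS A)" using nr_in_NS[OF g H1(1)] span_base by blast
      then have "nr H1 \<in> span {nr H, a0}" using span2[of H0 H] H H0 a0_def by auto
      moreover have "\<And>y. y \<in> {nr H, a0} \<Longrightarrow> orthogonal v y"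
        using hv va0 unfolding orthogonal_def by (auto simp: inner_commute)
      ultimately have "orthogonal v (nr H1)" by (rule orthogonal_to_span)
      then show False using h1v unfolding orthogonal_def by (simp add: inner_commute)
    qed
  qed
  have modu: "\<forall>H\<in>A - {H0}. \<forall>H'\<in>A - {H0}. H \<noteq> H' \<longrightarrow> (\<exists>H0'\<in>{H0}. H \<inter> H' \<subseteq> H0')"
  proof (intro ballI impI)
    fix H H' assume H: "H \<in> A - {H0}" "H' \<in> A - {H0}" "H \<noteq> H'"
    have "a0 \<in> span (NS A)" using nr_in_NS[OF g H0] span_base a0_def by blast
    then have a0s: "a0 \<in> span {nr H', nr H}" using span2[of H H'] H by auto
    have "H \<inter> H' \<subseteq> H0"
    proof
      fix x assume x: "x \<in> H \<inter> H'"
      have "nr H \<bullet> x = 0" "nr H' \<bullet> x = 0" using x H goodnrm_mem[OF g] by auto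
      then have "\<And>y. y \<in> {nr H', nr H} \<Longrightarrow> orthogonal x y"
        unfolding orthogonal_def by (auto simp: inner_commute)
      then have "orthogonal x a0" using orthogonal_to_span[OF a0s] by blast
      then have "a0 \<bullet> x = 0" unfolding orthogonal_def by (simp add: inner_commute)
      then show "x \<in> H0" using goodnrm_mem[OF g H0] a0_def by simp
    qed
    then show "\<exists>H0'\<in>{H0}. H \<inter> H' \<subseteq> H0'" by blast
  qed
  have g0: "goodnrm nr {H0}" using goodnrm_subset[OF g] H0 by auto
  obtain cs0 where cs0: "cyc {H0} cs0" "length cs0 = 2" using rank1_cyc[OF g0] by blast
  have "\<exists>cs. cyc A cs \<and> length cs = length cs0 * (card (A - {H0}) + 1)"
    by (rule core_apply[OF g fin _ refl _ v1 modu cs0(1)]) (use H0 va0 a0_def cs0(2) in auto)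
  then obtain cs where cs: "cyc A cs" "length cs = 2 * (card (A - {H0}) + 1)" using cs0(2) by auto
  have "H1 \<in> A - {H0}" using H1 H10 by auto
  then have "card (A - {H0}) \<ge> 1" using fin by (metis card_0_eq finite_Diff empty_iff less_one not_le)
  then show ?thesis using cs by auto
qed

lemma step_case:
  fixes A A0 A1 :: "'a::euclidean_space set set"
  assumes arr: "arrangement A" and r: "arr_rank A \<ge> 3" and U: "A = A0 \<union> A1" and D: "A0 \<inter> A1 = {}"
    and r0: "arr_rank A0 = arr_rank A - 1"
    and modu: "\<forall>H'\<in>A1. \<forall>H''\<in>A1. H' \<noteq> H'' \<longrightarrow> (\<exists>H\<in>A0. H' \<inter> H'' \<subseteq> H)"
    and c0: "cyc A0 cs0" and l0: "length cs0 \<ge> 4"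
  shows "\<exists>cs. cyc A cs \<and> length cs \<ge> 4"
proof -
  define nr :: "'a set \<Rightarrow> 'a" where "nr = nrA"
  have g: "goodnrm nr A" using nrA_good[OF arr] nr_def by simp
  have fin: "finite A" using arr unfolding arrangement_def by simp
  have sub: "A0 \<subseteq> A" using U by auto
  have A1e: "A1 = A - A0" using U D by auto
  have g0: "goodnrm nr A0" using goodnrm_subset[OF g sub] .
  define W where "W = span (NS A0)"
  have "\<not> NS A \<subseteq> W"
  proof
    assume "NS A \<subseteq> W"
    then have "dim (NS A) \<le> dim W" by (rule dim_subset)
    then have "arr_rank A \<le> arr_rank A0" unfolding W_def rank_NS by simp
    then show False using r r0 by simp
  qed
  then obtain a where a: "a \<in> NS A" "a \<notin> W" by blast
  obtain H1 k where H1: "H1 \<in> A" "k \<noteq> 0" "a = k *\<^sub>R nr H1" using NS_scale[OF g a(1)] by blast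
  have n1: "nr H1 \<notin> W"
  proof
    assume "nr H1 \<in> W"
    then have "a \<in> W" using H1(3) span_scale unfolding W_def by blast
    then show False using a(2) by simp
  qed
  have H1A1: "H1 \<in> A1"
  proof -
    have "H1 \<notin> A0"
    proof
      assume "H1 \<in> A0"
      then have "nr H1 \<in> NS A0" using nr_in_NS[OF g0] by blast
      then show False using n1 span_base unfolding W_def by blast
    qed
    then show ?thesis using H1(1) U by auto
  qed
  obtain w v where w: "w \<in> W" and v: "\<And>x. x \<in> W \<Longrightarrow> orthogonal v x"
    and dec: "nr H1 = w + v"
    using orthogonal_subspace_decomp_exists[of "NS A0" "nr H1"] unfolding W_def by metis
  have v0: "\<forall>H\<in>A0. nr H \<bullet> v = 0"
  proof
    fix H assume "H \<in> A0"
    then have "nr H \<in> W" using nr_in_NS[OF g0] span_base unfolding W_def by blast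
    then have "orthogonal v (nr H)" using v by blast
    then show "nr H \<bullet> v = 0" unfolding orthogonal_def by (simp add: inner_commute)
  qed
  have vne: "v \<noteq> 0" using dec w n1 by auto
  have wv: "w \<bullet> v = 0" using v[OF w] unfolding orthogonal_def by (simp add: inner_commute)
  have h1v: "nr H1 \<bullet> v \<noteq> 0" using dec wv vne by (simp add: inner_add_left)
  have v1: "\<forall>H\<in>A - A0. nr H \<bullet> v \<noteq> 0"
  proof
    fix H assume HA: "H \<in> A - A0"
    then have HA1: "H \<in> A1" "H \<in> A" using U by auto
    show "nr H \<bullet> v \<noteq> 0"
    proof (cases "H = H1")
      case True then show ?thesis using h1v by simp
    next
      case False
      then obtain H0 where H0: "H0 \<in> A0" "H \<inter> H1 \<subseteq> H0" using modu HA1 H1A1 by blast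
      have H0A: "H0 \<in> A" using H0 sub by auto
      have "nr H0 \<in> span {nr H, nr H1}"
      proof (rule in_span_of_orth)
        fix x assume "\<forall>b\<in>{nr H, nr H1}. b \<bullet> x = 0"
        then have "x \<in> H" "x \<in> H1" using goodnrm_mem[OF g] HA1 H1 by auto
        then have "x \<in> H0" using H0 by auto
        then show "nr H0 \<bullet> x = 0" using goodnrm_mem[OF g H0A] by simp
      qed
      then obtain c where "nr H0 - c *\<^sub>R nr H \<in> span {nr H1}" using span_breakdown_eq by blast
      then obtain b where bc: "nr H0 - c *\<^sub>R nr H = b *\<^sub>R nr H1" unfolding span_singleton by auto
      show ?thesis
      proof
        assume hv: "nr H \<bullet> v = 0"
        have "(nr H0 - c *\<^sub>R nr H) \<bullet> v = b * (nr H1 \<bullet> v)" using bc by simp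
        then have "b * (nr H1 \<bullet> v) = 0" using hv v0 H0(1) by (simp add: inner_diff_left)
        then have "b = 0" using h1v by simp
        then have "nr H0 = c *\<^sub>R nr H" using bc by simp
        then have "H0 = H" by (rule same_hyp[OF g HA1(2) H0A])
        then show False using H0(1) HA1(1) D by auto
      qed
    qed
  qed
  have modu': "\<forall>H\<in>A - A0. \<forall>H'\<in>A - A0. H \<noteq> H' \<longrightarrow> (\<exists>H0\<in>A0. H \<inter> H' \<subseteq> H0)"
    using modu A1e by simp
  have ne: "cs0 \<noteq> []" using l0 by auto
  obtain cs where cs: "cyc A cs" "length cs = length cs0 * (card (A - A0) + 1)"
    using core_apply[OF g fin sub refl v0 v1 modu' c0 ne] by blast
  have "length cs0 * 1 \<le> length cs0 * (card (A - A0) + 1)" by (intro mult_le_mono2) simp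
  then show ?thesis using cs l0 by auto
qed

lemma main:
  fixes A :: "'a::euclidean_space set set"
  assumes "supersolvable A"
  shows "arr_rank A \<ge> 2 \<Longrightarrow> \<exists>cs. cyc A cs \<and> length cs \<ge> 4"
  using assms
proof (induction A rule: supersolvable.induct)
  case (base A)
  then have "arr_rank A = 2" by simp
  then show ?case using base_case base.hyps(1) by blast
next
  case (step A A0 A1)
  have "arr_rank A0 \<ge> 2" using step.hyps(2) step.hyps(8) by simp
  then obtain cs0 where "cyc A0 cs0" "length cs0 \<ge> 4" using step.IH by blast
  then show ?case using step_case[OF step.hyps(1) step.hyps(2) step.hyps(3) step.hyps(4) step.hyps(8) step.hyps(9)]
    by blast
qed


theorem theorem1p1:
  fixes \<A> :: "'a::euclidean_space set set"
  assumes "arrangement \<A>" and "supersolvable \<A>" and "arr_rank \<A> \<ge> 2"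
  shows "\<exists>cs. hamiltonian_cycle \<A> cs \<and> even (length cs)"
proof -
  obtain cs where "cyc \<A> cs" "length cs \<ge> 4" using main[OF assms(2) assms(3)] by blast
  then show ?thesis unfolding cyc_def hamiltonian_cycle_def by auto
qed

end
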